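(* Let $A$ be a skew brace. If every ideal of $A$ has finite weight, then $\mathrm{Spec}\,A$ with the spectral topology is a Noetherian topological space (its closed subsets satisfy the descending chain condition).
   Context: A (left) skew brace is a triple $(A,+,\circ)$ where $(A,+)$ and $(A,\circ)$ are groups such that $a\circ(b+c)=a\circ b-a+a\circ c$ for all $a,b,c$; common identity $e$. Put $\lambda_a(b)=-a+a\circ b$, $a*b=-a+a\circ b-b$. An ideal is a normal subgroup $I$ of both $(A,+)$ and $(A,\circ)$ with $\lambda_a(I)\subseteq I$ for all $a$. The weight of an ideal (as a skew brace) is the minimal number of elements needed to generate it as an ideal; an ideal has finite weight if it is generated as an ideal by finitely many elements (equivalently, all ideals have finite weight iff every ascending chain of ideals of $A$ stabilizes). For subsets $I,J$, $I*J=\{i*j\mid i\in I,j\in J\}$. A prime ideal is a proper ideal $P$ such that for any subsets $I,J$ of $A$, $I*J\subseteq P$ implies $I\subseteq P$ or $J\subseteq P$; $\mathrm{Spec}\,A$ is the set of prime ideals. The spectral topology on $\mathrm{Spec}\,A$ has closed sets $H(I)=\{P\in\mathrm{Spec}\,A\mid I\subseteq P\}$, $I$ an ideal. *)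

theory Defs
  imports "HOL-Algebra.Group" "HOL-Algebra.Coset" "HOL-Analysis.Abstract_Topology"
begin

text \<open>A (left) skew brace on the common carrier of two groups: the additive
group G (library operation otimes of G plays the role of +, inv of G is minus)
and the multiplicative group C (otimes of C plays the role of circ).\<close>

definition skew_brace :: "('a,'b) monoid_scheme \<Rightarrow> ('a,'c) monoid_scheme \<Rightarrow> bool" where
  "skew_brace G C \<longleftrightarrow> group G \<and> group C \<and> carrier G = carrier C \<and> \<one>\<^bsub>G\<^esub> = \<one>\<^bsub>C\<^esub> \<and>
     (\<forall>a\<in>carrier G. \<forall>b\<in>carrier G. \<forall>c\<in>carrier G.
        a \<otimes>\<^bsub>C\<^esub> (b \<otimes>\<^bsub>G\<^esub> c) = ((a \<otimes>\<^bsub>C\<^esub> b) \<otimes>\<^bsub>G\<^esub> inv\<^bsub>G\<^esub> a) \<otimes>\<^bsub>G\<^esub> (a \<otimes>\<^bsub>C\<^esub> c))"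

definition brace_lambda :: "('a,'b) monoid_scheme \<Rightarrow> ('a,'c) monoid_scheme \<Rightarrow> 'a \<Rightarrow> 'a \<Rightarrow> 'a" where
  "brace_lambda G C a b = inv\<^bsub>G\<^esub> a \<otimes>\<^bsub>G\<^esub> (a \<otimes>\<^bsub>C\<^esub> b)"

definition brace_star :: "('a,'b) monoid_scheme \<Rightarrow> ('a,'c) monoid_scheme \<Rightarrow> 'a \<Rightarrow> 'a \<Rightarrow> 'a" where
  "brace_star G C a b = (inv\<^bsub>G\<^esub> a \<otimes>\<^bsub>G\<^esub> (a \<otimes>\<^bsub>C\<^esub> b)) \<otimes>\<^bsub>G\<^esub> inv\<^bsub>G\<^esub> b"

definition brace_star_set :: "('a,'b) monoid_scheme \<Rightarrow> ('a,'c) monoid_scheme \<Rightarrow> 'a set \<Rightarrow> 'a set \<Rightarrow> 'a set" where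
  "brace_star_set G C I J = {brace_star G C i j | i j. i \<in> I \<and> j \<in> J}"

definition brace_ideal :: "('a,'b) monoid_scheme \<Rightarrow> ('a,'c) monoid_scheme \<Rightarrow> 'a set \<Rightarrow> bool" where
  "brace_ideal G C I \<longleftrightarrow> normal I G \<and> normal I C \<and>
     (\<forall>a\<in>carrier G. brace_lambda G C a ` I \<subseteq> I)"

definition brace_ideal_gen :: "('a,'b) monoid_scheme \<Rightarrow> ('a,'c) monoid_scheme \<Rightarrow> 'a set \<Rightarrow> 'a set" where
  "brace_ideal_gen G C S = \<Inter> {I. brace_ideal G C I \<and> S \<subseteq> I}"

definition finite_weight :: "('a,'b) monoid_scheme \<Rightarrow> ('a,'c) monoid_scheme \<Rightarrow> 'a set \<Rightarrow> bool" where
  "finite_weight G C I \<longleftrightarrow> (\<exists>S. finite S \<and> S \<subseteq> I \<and> brace_ideal_gen G C S = I)"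

definition prime_ideal :: "('a,'b) monoid_scheme \<Rightarrow> ('a,'c) monoid_scheme \<Rightarrow> 'a set \<Rightarrow> bool" where
  "prime_ideal G C P \<longleftrightarrow> brace_ideal G C P \<and> P \<noteq> carrier G \<and>
     (\<forall>I J. I \<subseteq> carrier G \<longrightarrow> J \<subseteq> carrier G \<longrightarrow>
        brace_star_set G C I J \<subseteq> P \<longrightarrow> I \<subseteq> P \<or> J \<subseteq> P)"

definition Spec :: "('a,'b) monoid_scheme \<Rightarrow> ('a,'c) monoid_scheme \<Rightarrow> 'a set set" where
  "Spec G C = {P. prime_ideal G C P}"

definition hull_H :: "('a,'b) monoid_scheme \<Rightarrow> ('a,'c) monoid_scheme \<Rightarrow> 'a set \<Rightarrow> 'a set set" where
  "hull_H G C I = {P \<in> Spec G C. I \<subseteq> P}"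

definition spectral_topology :: "('a,'b) monoid_scheme \<Rightarrow> ('a,'c) monoid_scheme \<Rightarrow> 'a set topology" where
  "spectral_topology G C = topology (\<lambda>U. U \<subseteq> Spec G C \<and>
      (\<exists>I. brace_ideal G C I \<and> Spec G C - U = hull_H G C I))"

definition noetherian_space :: "'a topology \<Rightarrow> bool" where
  "noetherian_space T \<longleftrightarrow> (\<forall>F :: nat \<Rightarrow> 'a set. (\<forall>n. closedin T (F n)) \<and> (\<forall>n. F (Suc n) \<subseteq> F n)
      \<longrightarrow> (\<exists>N. \<forall>n\<ge>N. F n = F N))"

end

theory Submission
  imports Defs
begin

lemma normal_Inter_fam:
  assumes "group G" "K \<noteq> {}" "\<And>I. I \<in> K \<Longrightarrow> normal I G"
  shows "normal (\<Inter>K) G"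
proof -
  interpret group G by fact
  have "subgroup (\<Inter>K) G"
    by (rule subgroups_Inter) (use assms normal_imp_subgroup in auto)
  moreover have "\<forall>x \<in> carrier G. \<forall>h \<in> \<Inter>K. x \<otimes>\<^bsub>G\<^esub> h \<otimes>\<^bsub>G\<^esub> inv\<^bsub>G\<^esub> x \<in> \<Inter>K"
    using assms(3) normal_inv_iff by blast
  ultimately show ?thesis using normal_inv_iff by blast
qed

lemma ideal_Inter:
  assumes "skew_brace G C" "K \<noteq> {}" "\<And>I. I \<in> K \<Longrightarrow> brace_ideal G C I"
  shows "brace_ideal G C (\<Inter>K)"
proof -
  have gG: "group G" and gC: "group C" using assms(1) unfolding skew_brace_def by auto
  have "normal (\<Inter>K) G"
    by (rule normal_Inter_fam[OF gG assms(2)]) (use assms(3) in \<open>simp add: brace_ideal_def\<close>)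
  moreover have "normal (\<Inter>K) C"
    by (rule normal_Inter_fam[OF gC assms(2)]) (use assms(3) in \<open>simp add: brace_ideal_def\<close>)
  moreover have "brace_lambda G C a ` (\<Inter>K) \<subseteq> \<Inter>K" if a: "a \<in> carrier G" for a
  proof
    fix y assume "y \<in> brace_lambda G C a ` (\<Inter>K)"
    then obtain x where x: "x \<in> \<Inter>K" and y: "y = brace_lambda G C a x" by blast
    show "y \<in> \<Inter>K"
    proof
      fix I assume I: "I \<in> K"
      hence "brace_lambda G C a ` I \<subseteq> I" using assms(3) a unfolding brace_ideal_def by blast
      moreover have "x \<in> I" using x I by blast
      ultimately show "y \<in> I" using y by blast
    qed
  qed
  ultimately show ?thesis unfolding brace_ideal_def by blast
qed

lemma ideal_carrier:
  assumes "skew_brace G C"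
  shows "brace_ideal G C (carrier G)"
proof -
  have gG: "group G" and gC: "group C" and cc: "carrier G = carrier C"
    using assms unfolding skew_brace_def by auto
  have "normal (carrier G) G"
    using group.normal_inv_iff[OF gG] group.subgroup_self[OF gG] group.subgroupE(4)[OF gG group.subgroup_self[OF gG]]
    by (metis gG group.inv_closed monoid.m_closed group.is_monoid)
  moreover have "normal (carrier G) C"
    using group.normal_inv_iff[OF gC] group.subgroup_self[OF gC] cc
    by (metis gC group.inv_closed monoid.m_closed group.is_monoid)
  moreover have "\<forall>a\<in>carrier G. brace_lambda G C a ` carrier G \<subseteq> carrier G"
    unfolding brace_lambda_def using gG gC cc
    by (auto intro!: monoid.m_closed group.is_monoid group.inv_closed)
  ultimately show ?thesis unfolding brace_ideal_def by auto
qed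

lemma ideal_sub:
  "brace_ideal G C I \<Longrightarrow> I \<subseteq> carrier G"
  unfolding brace_ideal_def by (meson normal_imp_subgroup subgroup.subset)

lemma gen_ideal:
  assumes "skew_brace G C" "S \<subseteq> carrier G"
  shows "brace_ideal G C (brace_ideal_gen G C S)"
  unfolding brace_ideal_gen_def
  by (rule ideal_Inter) (use assms ideal_carrier in auto)

lemma gen_least:
  "brace_ideal G C I \<Longrightarrow> S \<subseteq> I \<Longrightarrow> brace_ideal_gen G C S \<subseteq> I"
  unfolding brace_ideal_gen_def by auto

lemma gen_sup: "S \<subseteq> brace_ideal_gen G C S"
  unfolding brace_ideal_gen_def by auto

lemma gen_mono: "S \<subseteq> T \<Longrightarrow> brace_ideal_gen G C S \<subseteq> brace_ideal_gen G C T"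
  unfolding brace_ideal_gen_def by auto


lemma star_in:
  assumes sb: "skew_brace G C" and I: "brace_ideal G C I" and J: "brace_ideal G C J"
    and i: "i \<in> I" and j: "j \<in> J"
  shows "brace_star G C i j \<in> I \<inter> J"
proof -
  have gG: "group G" and gC: "group C" and cc: "carrier G = carrier C"
    using sb unfolding skew_brace_def by auto
  interpret G: group G by fact
  interpret C: group C by fact
  have nIG: "normal I G" and nIC: "normal I C" and lI: "\<forall>a\<in>carrier G. brace_lambda G C a ` I \<subseteq> I"
    using I unfolding brace_ideal_def by auto
  have nJG: "normal J G" and lJ: "\<forall>a\<in>carrier G. brace_lambda G C a ` J \<subseteq> J"
    using J unfolding brace_ideal_def by auto
  have sI: "subgroup I G" using nIG normal_imp_subgroup by blast
  have sJ: "subgroup J G" using nJG normal_imp_subgroup by blast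
  have iG: "i \<in> carrier G" using i sI subgroup.subset by blast
  have jG: "j \<in> carrier G" using j sJ subgroup.subset by blast
  have iC: "i \<in> carrier C" and jC: "j \<in> carrier C" using iG jG cc by auto
  have "brace_lambda G C i ` J \<subseteq> J" using lJ iG by blast
  hence l1: "inv\<^bsub>G\<^esub> i \<otimes>\<^bsub>G\<^esub> (i \<otimes>\<^bsub>C\<^esub> j) \<in> J"
    using j unfolding brace_lambda_def by blast
  have l2: "inv\<^bsub>G\<^esub> j \<in> J" by (rule subgroup.m_inv_closed[OF sJ j])
  have inJ: "brace_star G C i j \<in> J"
    unfolding brace_star_def by (rule subgroup.m_closed[OF sJ l1 l2])
  define k where "k = inv\<^bsub>C\<^esub> j \<otimes>\<^bsub>C\<^esub> i \<otimes>\<^bsub>C\<^esub> j"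
  have kI: "k \<in> I" unfolding k_def using normal.inv_op_closed1[OF nIC jC i] .
  have kC: "k \<in> carrier C" unfolding k_def using iC jC by auto
  have jk: "j \<otimes>\<^bsub>C\<^esub> k = i \<otimes>\<^bsub>C\<^esub> j"
  proof -
    have "j \<otimes>\<^bsub>C\<^esub> k = j \<otimes>\<^bsub>C\<^esub> (inv\<^bsub>C\<^esub> j \<otimes>\<^bsub>C\<^esub> (i \<otimes>\<^bsub>C\<^esub> j))"
      unfolding k_def using iC jC by (simp add: C.m_assoc)
    also have "\<dots> = (j \<otimes>\<^bsub>C\<^esub> inv\<^bsub>C\<^esub> j) \<otimes>\<^bsub>C\<^esub> (i \<otimes>\<^bsub>C\<^esub> j)"
      using iC jC by (simp only: C.m_assoc C.inv_closed C.m_closed)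
    also have "\<dots> = i \<otimes>\<^bsub>C\<^esub> j" using iC jC by simp
    finally show ?thesis .
  qed
  define l where "l = brace_lambda G C j k"
  have lI': "l \<in> I" unfolding l_def using lI jG kI by blast
  have lG: "l \<in> carrier G" using lI' sI subgroup.subset by blast
  have ijG: "i \<otimes>\<^bsub>C\<^esub> j \<in> carrier G" using iC jC cc by auto
  have jl: "j \<otimes>\<^bsub>G\<^esub> l = i \<otimes>\<^bsub>C\<^esub> j"
  proof -
    have "j \<otimes>\<^bsub>G\<^esub> l = (j \<otimes>\<^bsub>G\<^esub> inv\<^bsub>G\<^esub> j) \<otimes>\<^bsub>G\<^esub> (i \<otimes>\<^bsub>C\<^esub> j)"
      unfolding l_def brace_lambda_def jk using jG ijG by (simp only: G.m_assoc G.inv_closed)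
    also have "\<dots> = i \<otimes>\<^bsub>C\<^esub> j" using jG ijG by simp
    finally show ?thesis .
  qed
  have eq: "brace_star G C i j = inv\<^bsub>G\<^esub> i \<otimes>\<^bsub>G\<^esub> (j \<otimes>\<^bsub>G\<^esub> l \<otimes>\<^bsub>G\<^esub> inv\<^bsub>G\<^esub> j)"
    unfolding brace_star_def jl[symmetric] using iG jG lG by (simp only: G.m_assoc G.inv_closed G.m_closed)
  have c1: "j \<otimes>\<^bsub>G\<^esub> l \<otimes>\<^bsub>G\<^esub> inv\<^bsub>G\<^esub> j \<in> I" using normal.inv_op_closed2[OF nIG jG lI'] .
  have c2: "inv\<^bsub>G\<^esub> i \<in> I" by (rule subgroup.m_inv_closed[OF sI i])
  have "brace_star G C i j \<in> I" unfolding eq by (rule subgroup.m_closed[OF sI c2 c1])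
  with inJ show ?thesis by blast
qed


lemma chain_two:
  assumes "mono (J :: nat \<Rightarrow> 'a set)" "x \<in> \<Union>(range J)" "y \<in> \<Union>(range J)"
  shows "\<exists>n. x \<in> J n \<and> y \<in> J n"
proof -
  obtain a b where a: "x \<in> J a" and b: "y \<in> J b" using assms by blast
  have "J a \<subseteq> J (max a b)" "J b \<subseteq> J (max a b)"
    using assms(1) by (simp_all add: monoD)
  thus ?thesis using a b by blast
qed

lemma normal_chain:
  assumes gX: "group X" and nJ: "\<And>n. normal (J n) X" and mJ: "mono (J :: nat \<Rightarrow> 'a set)"
  shows "normal (\<Union>(range J)) X"
proof -
  interpret group X by fact
  have sJ: "\<And>n. subgroup (J n) X" using nJ normal_imp_subgroup by blast
  have "subgroup (\<Union>(range J)) X"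
  proof (rule subgroup.intro)
    show "\<Union>(range J) \<subseteq> carrier X" using sJ subgroup.subset by blast
    show "x \<otimes>\<^bsub>X\<^esub> y \<in> \<Union>(range J)" if xy: "x \<in> \<Union>(range J)" "y \<in> \<Union>(range J)" for x y
    proof -
      obtain n where "x \<in> J n" "y \<in> J n" using chain_two[OF mJ xy] by blast
      hence "x \<otimes>\<^bsub>X\<^esub> y \<in> J n" using subgroup.m_closed[OF sJ] by blast
      thus ?thesis by blast
    qed
    show "\<one>\<^bsub>X\<^esub> \<in> \<Union>(range J)" using subgroup.one_closed[OF sJ[of 0]] by blast
    show "inv\<^bsub>X\<^esub> x \<in> \<Union>(range J)" if xU: "x \<in> \<Union>(range J)" for x
    proof -
      obtain n where "x \<in> J n" using xU by blast
      hence "inv\<^bsub>X\<^esub> x \<in> J n" using subgroup.m_inv_closed[OF sJ] by blast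
      thus ?thesis by blast
    qed
  qed
  moreover have "\<forall>x \<in> carrier X. \<forall>h \<in> \<Union>(range J). x \<otimes>\<^bsub>X\<^esub> h \<otimes>\<^bsub>X\<^esub> inv\<^bsub>X\<^esub> x \<in> \<Union>(range J)"
  proof (intro ballI)
    fix x h assume x: "x \<in> carrier X" and h: "h \<in> \<Union>(range J)"
    then obtain n where hn: "h \<in> J n" by blast
    have "x \<otimes>\<^bsub>X\<^esub> h \<otimes>\<^bsub>X\<^esub> inv\<^bsub>X\<^esub> x \<in> J n" using normal.inv_op_closed2[OF nJ x hn] .
    thus "x \<otimes>\<^bsub>X\<^esub> h \<otimes>\<^bsub>X\<^esub> inv\<^bsub>X\<^esub> x \<in> \<Union>(range J)" by blast
  qed
  ultimately show ?thesis using normal_inv_iff by blast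
qed

lemma ideal_chain:
  assumes sb: "skew_brace G C" and iJ: "\<And>n. brace_ideal G C (J n)" and mJ: "mono (J :: nat \<Rightarrow> 'a set)"
  shows "brace_ideal G C (\<Union>(range J))"
proof -
  have gG: "group G" and gC: "group C" using sb unfolding skew_brace_def by auto
  have nG: "\<And>n. normal (J n) G" using iJ unfolding brace_ideal_def by blast
  have "normal (\<Union>(range J)) G" by (rule normal_chain[OF gG nG mJ])
  moreover have "normal (\<Union>(range J)) C"
    by (rule normal_chain[OF gC _ mJ]) (use iJ in \<open>simp add: brace_ideal_def\<close>)
  moreover have "brace_lambda G C a ` (\<Union>(range J)) \<subseteq> \<Union>(range J)" if a: "a \<in> carrier G" for a
  proof
    fix y assume "y \<in> brace_lambda G C a ` (\<Union>(range J))"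
    then obtain x n where x: "x \<in> J n" and y: "y = brace_lambda G C a x" by blast
    have "brace_lambda G C a ` J n \<subseteq> J n" using iJ a unfolding brace_ideal_def by blast
    hence "y \<in> J n" using x y by blast
    thus "y \<in> \<Union>(range J)" by blast
  qed
  ultimately show ?thesis unfolding brace_ideal_def by blast
qed

lemma finite_chain:
  assumes "finite S" "S \<subseteq> \<Union>(range J)" "mono (J :: nat \<Rightarrow> 'a set)"
  shows "\<exists>N. S \<subseteq> J N"
  using assms(1,2)
proof (induction S rule: finite_induct)
  case empty then show ?case by blast
next
  case (insert x S)
  then obtain N where N: "S \<subseteq> J N" by blast
  obtain m where m: "x \<in> J m" using insert.prems by blast
  have "J N \<subseteq> J (max N m)" "J m \<subseteq> J (max N m)"
    using assms(3) by (simp_all add: monoD)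
  thus ?case using N m by blast
qed

lemma prime_ideal_sub:
  assumes P: "P \<in> Spec G C"
  shows "brace_ideal G C P \<and> P \<subseteq> carrier G \<and> P \<noteq> carrier G"
proof -
  have p: "prime_ideal G C P" using P by (simp add: Spec_def)
  have a: "brace_ideal G C P" using p unfolding prime_ideal_def by (elim conjE)
  have b: "P \<noteq> carrier G" using p unfolding prime_ideal_def by (elim conjE)
  have c: "P \<subseteq> carrier G" by (rule ideal_sub[OF a])
  show ?thesis using a b c by simp
qed

lemma H_gen:
  assumes "P \<in> Spec G C"
  shows "brace_ideal_gen G C S \<subseteq> P \<longleftrightarrow> S \<subseteq> P"
proof
  assume h: "brace_ideal_gen G C S \<subseteq> P"
  show "S \<subseteq> P" by (rule subset_trans[OF gen_sup h])
next
  assume h: "S \<subseteq> P"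
  have "brace_ideal G C P" using prime_ideal_sub[OF assms] by simp
  thus "brace_ideal_gen G C S \<subseteq> P" using h by (rule gen_least)
qed

lemma H_inter:
  assumes sb: "skew_brace G C" and I: "brace_ideal G C I" and J: "brace_ideal G C J"
  shows "hull_H G C (I \<inter> J) = hull_H G C I \<union> hull_H G C J"
proof
  show "hull_H G C I \<union> hull_H G C J \<subseteq> hull_H G C (I \<inter> J)"
    unfolding hull_H_def by blast
  show "hull_H G C (I \<inter> J) \<subseteq> hull_H G C I \<union> hull_H G C J"
  proof
    fix P assume "P \<in> hull_H G C (I \<inter> J)"
    hence P: "P \<in> Spec G C" and sub: "I \<inter> J \<subseteq> P" unfolding hull_H_def by auto
    have pr: "prime_ideal G C P" using P unfolding Spec_def by blast
    have "brace_star_set G C I J \<subseteq> P"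
      unfolding brace_star_set_def using star_in[OF sb I J] sub by blast
    moreover have "I \<subseteq> carrier G" "J \<subseteq> carrier G" using ideal_sub I J by auto
    ultimately have "I \<subseteq> P \<or> J \<subseteq> P" using pr unfolding prime_ideal_def by blast
    thus "P \<in> hull_H G C I \<union> hull_H G C J" using P unfolding hull_H_def by blast
  qed
qed

definition spec_open where
  "spec_open G C U \<longleftrightarrow> U \<subseteq> Spec G C \<and> (\<exists>I. brace_ideal G C I \<and> Spec G C - U = hull_H G C I)"

lemma istop:
  assumes sb: "skew_brace G C"
  shows "istopology (spec_open G C)"
  unfolding istopology_def
proof (intro conjI allI impI)
  fix U V assume U: "spec_open G C U" and V: "spec_open G C V"
  then obtain I J where I: "brace_ideal G C I" "Spec G C - U = hull_H G C I"
    and J: "brace_ideal G C J" "Spec G C - V = hull_H G C J"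
    unfolding spec_open_def by blast
  have "brace_ideal G C (\<Inter>{I, J})" by (rule ideal_Inter[OF sb]) (use I J in auto)
  hence IJ: "brace_ideal G C (I \<inter> J)" by simp
  have "Spec G C - (U \<inter> V) = hull_H G C (I \<inter> J)"
    using H_inter[OF sb I(1) J(1)] I(2) J(2) by blast
  thus "spec_open G C (U \<inter> V)" using U IJ unfolding spec_open_def by blast
next
  fix K assume K: "\<forall>U\<in>K. spec_open G C U"
  hence "\<forall>U\<in>K. \<exists>I. brace_ideal G C I \<and> Spec G C - U = hull_H G C I"
    unfolding spec_open_def by blast
  then obtain f where f: "\<forall>U\<in>K. brace_ideal G C (f U) \<and> Spec G C - U = hull_H G C (f U)"
    by metis
  define S where "S = \<Union>(f ` K)"
  have Sc: "S \<subseteq> carrier G" unfolding S_def using f ideal_sub by blast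
  have gi: "brace_ideal G C (brace_ideal_gen G C S)" by (rule gen_ideal[OF sb Sc])
  have "Spec G C - \<Union>K = hull_H G C (brace_ideal_gen G C S)"
  proof (rule equalityI; rule subsetI)
    fix P assume P: "P \<in> Spec G C - \<Union>K"
    have "f U \<subseteq> P" if "U \<in> K" for U
    proof -
      have "P \<in> Spec G C - U" using P that by blast
      thus ?thesis using f that unfolding hull_H_def by blast
    qed
    hence "S \<subseteq> P" unfolding S_def by blast
    thus "P \<in> hull_H G C (brace_ideal_gen G C S)"
      using P H_gen[of P G C S] unfolding hull_H_def by blast
  next
    fix P assume "P \<in> hull_H G C (brace_ideal_gen G C S)"
    hence P: "P \<in> Spec G C" and "brace_ideal_gen G C S \<subseteq> P" unfolding hull_H_def by auto
    hence SP: "S \<subseteq> P" using H_gen[of P G C S] by blast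
    have "P \<notin> U" if "U \<in> K" for U
    proof -
      have "f U \<subseteq> P" using SP that unfolding S_def by blast
      hence "P \<in> hull_H G C (f U)" using P unfolding hull_H_def by blast
      thus ?thesis using f that by blast
    qed
    thus "P \<in> Spec G C - \<Union>K" using P by blast
  qed
  moreover have "\<Union>K \<subseteq> Spec G C" using K unfolding spec_open_def by blast
  ultimately show "spec_open G C (\<Union>K)" using gi unfolding spec_open_def by blast
qed

lemma openin_spec:
  assumes sb: "skew_brace G C"
  shows "openin (spectral_topology G C) = spec_open G C"
proof -
  have "spectral_topology G C = topology (spec_open G C)"
    unfolding spectral_topology_def spec_open_def[abs_def] by simp
  thus ?thesis using istop[OF sb] by simp
qed

lemma topspace_spec:
  assumes sb: "skew_brace G C"
  shows "topspace (spectral_topology G C) = Spec G C"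
proof -
  have "Spec G C - Spec G C = hull_H G C (carrier G)"
    unfolding hull_H_def using prime_ideal_sub by blast
  hence "spec_open G C (Spec G C)" using ideal_carrier[OF sb] unfolding spec_open_def by blast
  moreover have "\<And>U. spec_open G C U \<Longrightarrow> U \<subseteq> Spec G C" unfolding spec_open_def by blast
  ultimately show ?thesis unfolding topspace_def openin_spec[OF sb] by blast
qed

lemma closed_spec:
  assumes sb: "skew_brace G C" and "closedin (spectral_topology G C) F"
  shows "\<exists>I. brace_ideal G C I \<and> F = hull_H G C I"
proof -
  have F: "F \<subseteq> Spec G C" and o: "spec_open G C (Spec G C - F)"
    using assms(2) unfolding closedin_def topspace_spec[OF sb] openin_spec[OF sb] by auto
  then obtain I where "brace_ideal G C I" "Spec G C - (Spec G C - F) = hull_H G C I"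
    unfolding spec_open_def by blast
  moreover have "Spec G C - (Spec G C - F) = F" using F by blast
  ultimately show ?thesis by metis
qed

theorem proposition4p20:
  fixes G :: "('a,'b) monoid_scheme" and C :: "('a,'c) monoid_scheme"
  assumes "skew_brace G C"
    and "\<forall>I. brace_ideal G C I \<longrightarrow> finite_weight G C I"
  shows "noetherian_space (spectral_topology G C)"
  unfolding noetherian_space_def
proof (intro allI impI)
  note sb = assms(1)
  fix F :: "nat \<Rightarrow> 'a set set"
  assume "(\<forall>n. closedin (spectral_topology G C) (F n)) \<and> (\<forall>n. F (Suc n) \<subseteq> F n)"
  hence cl: "\<And>n. closedin (spectral_topology G C) (F n)" and dec: "\<And>n. F (Suc n) \<subseteq> F n" by auto
  have "\<forall>n. \<exists>I. brace_ideal G C I \<and> F n = hull_H G C I" using closed_spec[OF sb cl] by blast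
  then obtain I where I: "\<And>n. brace_ideal G C (I n)" and FI: "\<And>n. F n = hull_H G C (I n)" by metis
  define J where "J n = brace_ideal_gen G C (\<Union>k\<in>{..n}. I k)" for n
  have Jc: "(\<Union>k\<in>{..n}. I k) \<subseteq> carrier G" for n using I ideal_sub by blast
  have iJ: "brace_ideal G C (J n)" for n unfolding J_def by (rule gen_ideal[OF sb Jc])
  have mJ: "mono J" unfolding mono_def J_def
    by (intro allI impI gen_mono UN_mono) auto
  have HJ: "hull_H G C (J n) = F n" for n
  proof (rule equalityI; rule subsetI)
    fix P assume "P \<in> hull_H G C (J n)"
    hence P: "P \<in> Spec G C" and Jn: "J n \<subseteq> P" unfolding hull_H_def by auto
    have "(\<Union>k\<in>{..n}. I k) \<subseteq> P"
      using Jn H_gen[OF P, of "\<Union>k\<in>{..n}. I k"] unfolding J_def by simp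
    hence "I n \<subseteq> P" by blast
    thus "P \<in> F n" using P FI unfolding hull_H_def by blast
  next
    fix P assume Pn: "P \<in> F n"
    have "P \<in> F k" if "k \<le> n" for k using lift_Suc_antimono_le[of F, OF dec that] Pn by blast
    hence "I k \<subseteq> P" if "k \<le> n" for k using that FI unfolding hull_H_def by blast
    hence sub: "(\<Union>k\<in>{..n}. I k) \<subseteq> P" by blast
    have P: "P \<in> Spec G C" using Pn FI unfolding hull_H_def by blast
    have "J n \<subseteq> P" using sub H_gen[OF P, of "\<Union>k\<in>{..n}. I k"] unfolding J_def by simp
    thus "P \<in> hull_H G C (J n)" using P unfolding hull_H_def by blast
  qed
  have iU: "brace_ideal G C (\<Union>(range J))" by (rule ideal_chain[OF sb iJ mJ])
  have fw: "finite_weight G C (\<Union>(range J))" using assms(2) iU by simp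
  then obtain S where S: "finite S" "S \<subseteq> \<Union>(range J)" "brace_ideal_gen G C S = \<Union>(range J)"
    unfolding finite_weight_def by blast
  obtain N where N: "S \<subseteq> J N" using finite_chain[OF S(1,2) mJ] by blast
  have UN: "\<Union>(range J) \<subseteq> J N" using gen_least[OF iJ N] S(3) by simp
  have "F n = F N" if "n \<ge> N" for n
  proof -
    have "J N \<subseteq> J n" using mJ that by (simp add: monoD)
    hence "J n = J N" using UN by blast
    thus ?thesis using HJ by metis
  qed
  thus "\<exists>N. \<forall>n\<ge>N. F n = F N" by blast
qed

end
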